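(* Let $Q_1,Q_2\ge 1$ be integers, $\lambda_1,\lambda_2>0$, $p_{12},p_{21}\in[0,1]$, and set $s=\lambda_1+\lambda_2$, $s_1=\lambda_1+\lambda_2p_{21}$, $s_2=\lambda_2+\lambda_1p_{12}$. Let $\{(n_1(t),n_2(t)):t\ge 0\}$ be the inventory CTMC (defined in the context) started at $(n_1(0),n_2(0))=(Q_1,Q_2)$, and let $p_{(j_1,j_2)}(t)=P(n_1(t)=j_1,n_2(t)=j_2)$. Then for every $t\ge 0$: (a) for $1\le j_1\le Q_1$, $1\le j_2\le Q_2$, with $N=Q_1+Q_2-j_1-j_2$, $$p_{(j_1,j_2)}(t)=e^{-st}\frac{(st)^{N}}{N!}\binom{N}{Q_1-j_1}\Big(\frac{\lambda_1}{s}\Big)^{Q_1-j_1}\Big(\frac{\lambda_2}{s}\Big)^{Q_2-j_2};$$ (b) for $1\le j_1\le Q_1$, $$p_{(j_1,0)}(t)=\sum_{k=Q_1+Q_2-j_1}^{\infty}e^{-st}\frac{(st)^k}{k!}\sum_{l=Q_2}^{Q_1+Q_2-j_1}\binom{l-1}{Q_2-1}\Big(\frac{\lambda_2}{s}\Big)^{Q_2}\Big(\frac{\lambda_1}{s}\Big)^{l-Q_2}\binom{k-l}{Q_1+Q_2-j_1-l}\Big(\frac{s_1}{s}\Big)^{Q_1+Q_2-j_1-l}\Big(\frac{s-s_1}{s}\Big)^{k-Q_1-Q_2+j_1};$$ (c) for $1\le j_2\le Q_2$, $$p_{(0,j_2)}(t)=\sum_{k=Q_1+Q_2-j_2}^{\infty}e^{-st}\frac{(st)^k}{k!}\sum_{l=Q_1}^{Q_1+Q_2-j_2}\binom{l-1}{Q_1-1}\Big(\frac{\lambda_1}{s}\Big)^{Q_1}\Big(\frac{\lambda_2}{s}\Big)^{l-Q_1}\binom{k-l}{Q_1+Q_2-j_2-l}\Big(\frac{s_2}{s}\Big)^{Q_1+Q_2-j_2-l}\Big(\frac{s-s_2}{s}\Big)^{k-Q_1-Q_2+j_2};$$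 (d) $p_{(0,0)}(t)=1-\sum_{(j_1,j_2)\neq(0,0)}p_{(j_1,j_2)}(t)$.
   Context: Two products; customers wanting product $i$ arrive as independent Poisson processes of rate $\lambda_i$; a customer who wants product $i$ and finds it out of stock while product $j\ne i$ is in stock buys one unit of $j$ with probability $p_{ij}$ (otherwise the sale is lost). The inventory CTMC $\{(n_1(t),n_2(t))\}$ (with initial stock $(Q_1,Q_2)$, no replenishment) has state space $\{0,\dots,Q_1\}\times\{0,\dots,Q_2\}$ and transition rates: from $(i_1,i_2)$ with $i_1,i_2\ge1$, to $(i_1-1,i_2)$ at rate $\lambda_1$ and to $(i_1,i_2-1)$ at rate $\lambda_2$; from $(i_1,0)$ with $i_1\ge 1$, to $(i_1-1,0)$ at rate $s_1=\lambda_1+\lambda_2p_{21}$; from $(0,i_2)$ with $i_2\ge1$, to $(0,i_2-1)$ at rate $s_2=\lambda_2+\lambda_1p_{12}$; $(0,0)$ is absorbing. Here $s=\lambda_1+\lambda_2$. *)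

theory Defs
  imports Complex_Main
begin

definition inv_states :: "nat \<Rightarrow> nat \<Rightarrow> (nat \<times> nat) set" where
  "inv_states Q1 Q2 = {0..Q1} \<times> {0..Q2}"

definition inv_rate :: "real \<Rightarrow> real \<Rightarrow> real \<Rightarrow> real \<Rightarrow> nat \<times> nat \<Rightarrow> nat \<times> nat \<Rightarrow> real" where
  "inv_rate l1 l2 p12 p21 x y =
     (let i1 = fst x; i2 = snd x in
      if 1 \<le> i1 \<and> 1 \<le> i2 then
        (if y = (i1 - 1, i2) then l1 else if y = (i1, i2 - 1) then l2 else 0)
      else if 1 \<le> i1 \<and> i2 = 0 then
        (if y = (i1 - 1, 0) then l1 + l2 * p21 else 0)
      else if i1 = 0 \<and> 1 \<le> i2 then
        (if y = (0, i2 - 1) then l2 + l1 * p12 else 0)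
      else 0)"

definition inv_gen :: "nat \<Rightarrow> nat \<Rightarrow> real \<Rightarrow> real \<Rightarrow> real \<Rightarrow> real \<Rightarrow> nat \<times> nat \<Rightarrow> nat \<times> nat \<Rightarrow> real" where
  "inv_gen Q1 Q2 l1 l2 p12 p21 x y =
     (if x = y then - (\<Sum>z\<in>inv_states Q1 Q2 - {x}. inv_rate l1 l2 p12 p21 x z)
      else inv_rate l1 l2 p12 p21 x y)"

fun inv_gen_pow :: "nat \<Rightarrow> nat \<Rightarrow> real \<Rightarrow> real \<Rightarrow> real \<Rightarrow> real \<Rightarrow> nat \<Rightarrow> nat \<times> nat \<Rightarrow> nat \<times> nat \<Rightarrow> real" where
  "inv_gen_pow Q1 Q2 l1 l2 p12 p21 0 x y = (if x = y then 1 else 0)"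
| "inv_gen_pow Q1 Q2 l1 l2 p12 p21 (Suc n) x y =
     (\<Sum>z\<in>inv_states Q1 Q2. inv_gen_pow Q1 Q2 l1 l2 p12 p21 n x z * inv_gen Q1 Q2 l1 l2 p12 p21 z y)"

text \<open>Transition function P(t) = exp(t G) of the finite-state CTMC:
  inv_trans ... t x y = P(X(t) = y | X(0) = x).\<close>
definition inv_trans :: "nat \<Rightarrow> nat \<Rightarrow> real \<Rightarrow> real \<Rightarrow> real \<Rightarrow> real \<Rightarrow> real \<Rightarrow> nat \<times> nat \<Rightarrow> nat \<times> nat \<Rightarrow> real" where
  "inv_trans Q1 Q2 l1 l2 p12 p21 t x y =
     (\<Sum>n. t ^ n / fact n * inv_gen_pow Q1 Q2 l1 l2 p12 p21 n x y)"

end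

theory Submission
  imports Defs
begin


fun gpow :: "'a set \<Rightarrow> ('a \<Rightarrow> 'a \<Rightarrow> real) \<Rightarrow> nat \<Rightarrow> 'a \<Rightarrow> 'a \<Rightarrow> real" where
  "gpow S M 0 x y = (if x = y then 1 else 0)"
| "gpow S M (Suc n) x y = (\<Sum>z\<in>S. gpow S M n x z * M z y)"

lemma inv_gen_pow_eq:
  "inv_gen_pow Q1 Q2 l1 l2 p12 p21 n x y = gpow (inv_states Q1 Q2) (inv_gen Q1 Q2 l1 l2 p12 p21) n x y"
  by (induction n arbitrary: y) auto

lemma pascal_sum:
  fixes d :: "nat \<Rightarrow> real"
  shows "(\<Sum>k\<le>Suc n. real (Suc n choose k) * r^(Suc n - k) * d k)
       = (\<Sum>k\<le>n. real (n choose k) * r^(n-k) * d (Suc k)) + r * (\<Sum>k\<le>n. real (n choose k) * r^(n-k) * d k)"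
proof -
  have A: "(\<Sum>k\<le>Suc n. real (Suc n choose k) * r^(Suc n - k) * d k)
     = r^(Suc n) * d 0 + (\<Sum>k\<le>n. real (n choose k) * r^(n-k) * d (Suc k))
        + (\<Sum>k\<le>n. real (n choose Suc k) * r^(n-k) * d (Suc k))"
    by (subst sum.atMost_Suc_shift) (simp add: sum.distrib algebra_simps)
  have B: "r * (\<Sum>k\<le>n. real (n choose k) * r^(n-k) * d k)
      = (\<Sum>k\<le>Suc n. real (n choose k) * r^(Suc n-k) * d k)"
    by (simp add: sum_distrib_left Suc_diff_le algebra_simps)
  also have "\<dots> = r^(Suc n) * d 0 + (\<Sum>k\<le>n. real (n choose Suc k) * r^(n-k) * d (Suc k))"
    by (subst sum.atMost_Suc_shift) simp
  finally show ?thesis using A by simp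
qed

lemma gpow_binom:
  assumes fin: "finite S" and y: "y \<in> S" and s: "s \<noteq> 0"
  shows "gpow S G n x y = (\<Sum>k\<le>n. real (n choose k) * (-s)^(n-k) *
            (s^k * gpow S (\<lambda>z w. (if z = w then 1 else 0) + G z w / s) k x y))"
  using y
proof (induction n arbitrary: y)
  case 0
  then show ?case by simp
next
  case (Suc n)
  define M where "M = (\<lambda>z w. (if z = w then 1 else 0) + G z w / s)"
  define u where "u k w = gpow S M k x w" for k w
  have IH: "\<And>z. z \<in> S \<Longrightarrow> gpow S G n x z = (\<Sum>k\<le>n. real (n choose k) * (-s)^(n-k) * (s^k * u k z))"
    using Suc.IH unfolding M_def u_def by blast
  have key: "(\<Sum>z\<in>S. u k z * G z y) = s * u (Suc k) y - s * u k y" for k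
  proof -
    have "(\<Sum>z\<in>S. u k z * G z y) = (\<Sum>z\<in>S. s * (u k z * M z y) - s * (u k z * (if z = y then 1 else 0)))"
      by (rule sum.cong) (auto simp: M_def s field_simps)
    also have "\<dots> = s * (\<Sum>z\<in>S. u k z * M z y) - s * (\<Sum>z\<in>S. u k z * (if z = y then 1 else 0))"
      by (simp only: sum_subtractf sum_distrib_left)
    also have "(\<Sum>z\<in>S. u k z * (if z = y then 1 else 0)) = (\<Sum>z\<in>S. if z = y then u k y else 0)"
      by (rule sum.cong) auto
    also have "\<dots> = u k y" using Suc.prems fin by simp
    also have "(\<Sum>z\<in>S. u k z * M z y) = u (Suc k) y" by (simp add: u_def)
    finally show ?thesis .
  qed
  have "gpow S G (Suc n) x y = (\<Sum>z\<in>S. (\<Sum>k\<le>n. real (n choose k) * (-s)^(n-k) * (s^k * u k z)) * G z y)"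
    by (simp add: IH)
  also have "\<dots> = (\<Sum>k\<le>n. real (n choose k) * (-s)^(n-k) * s^k * (\<Sum>z\<in>S. u k z * G z y))"
    by (simp add: sum_distrib_right sum_distrib_left mult.assoc sum.swap[of _ S])
  also have "\<dots> = (\<Sum>k\<le>n. real (n choose k) * (-s)^(n-k) * s^k * (s * u (Suc k) y - s * u k y))"
    by (simp only: key)
  also have "\<dots> = (\<Sum>k\<le>n. real (n choose k) * (-s)^(n-k) * (s^(Suc k) * u (Suc k) y))
        + (-s) * (\<Sum>k\<le>n. real (n choose k) * (-s)^(n-k) * (s^k * u k y))"
    by (simp add: sum_distrib_left sum.distrib[symmetric] algebra_simps)
  also have "\<dots> = (\<Sum>k\<le>Suc n. real (Suc n choose k) * (-s)^(Suc n - k) * (s^k * u k y))"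
    by (rule pascal_sum[of n "-s" "\<lambda>k. s^k * u k y", symmetric])
  finally show ?case unfolding u_def M_def .
qed


lemma gpow_bound:
  assumes fin: "finite S" and y: "y \<in> S"
  shows "\<bar>gpow S M k x y\<bar> \<le> (real (card S) * (\<Sum>z\<in>S. \<Sum>w\<in>S. \<bar>M z w\<bar>))^k"
  using y
proof (induction k arbitrary: y)
  case 0 then show ?case by simp
next
  case (Suc k)
  define m where "m = (\<Sum>z\<in>S. \<Sum>w\<in>S. \<bar>M z w\<bar>)"
  have m: "\<bar>M z w\<bar> \<le> m" if "z \<in> S" "w \<in> S" for z w
  proof -
    have "\<bar>M z w\<bar> \<le> (\<Sum>w\<in>S. \<bar>M z w\<bar>)" using fin that by (intro member_le_sum) auto
    also have "\<dots> \<le> m" unfolding m_def using fin that by (intro member_le_sum[of z S "\<lambda>z. \<Sum>w\<in>S. \<bar>M z w\<bar>"]) (auto intro: sum_nonneg)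
    finally show ?thesis .
  qed
  have m0: "0 \<le> m" unfolding m_def by (intro sum_nonneg) auto
  have "\<bar>gpow S M (Suc k) x y\<bar> \<le> (\<Sum>z\<in>S. \<bar>gpow S M k x z * M z y\<bar>)"
    by (simp add: sum_abs)
  also have "\<dots> \<le> (\<Sum>z\<in>S. (real (card S) * m)^k * m)"
    unfolding abs_mult using Suc.IH[folded m_def] m Suc.prems m0
    by (intro sum_mono mult_mono) auto
  also have "\<dots> = (real (card S) * m)^Suc k" by (simp add: algebra_simps)
  finally show ?case unfolding m_def .
qed

lemma exp_comp_summable:
  fixes f :: "nat \<Rightarrow> real"
  assumes "\<And>k. \<bar>f k\<bar> \<le> B^k"
  shows "summable (\<lambda>k. norm (x^k / fact k * f k))"
proof (rule summable_comparison_test[of _ "\<lambda>k. inverse (fact k) * (\<bar>x\<bar> * B)^k"])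
  show "summable (\<lambda>k. inverse (fact k) * (\<bar>x\<bar> * B)^k)" by (rule summable_exp)
  show "\<exists>N. \<forall>n\<ge>N. norm (norm (x ^ n / fact n * f n)) \<le> inverse (fact n) * (\<bar>x\<bar> * B) ^ n"
  proof (intro exI allI impI)
    fix n :: nat
    have "norm (norm (x ^ n / fact n * f n)) = inverse (fact n) * (\<bar>x\<bar>^n * \<bar>f n\<bar>)"
      by (simp add: abs_mult power_abs divide_inverse)
    also have "\<dots> \<le> inverse (fact n) * (\<bar>x\<bar>^n * B^n)"
      using assms by (intro mult_left_mono) auto
    finally show "norm (norm (x ^ n / fact n * f n)) \<le> inverse (fact n) * (\<bar>x\<bar> * B) ^ n"
      by (simp add: power_mult_distrib)
  qed
qed

lemma gpow_exp_sums:
  assumes fin: "finite S" and y: "y \<in> S" and s: "s \<noteq> 0"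
  shows "(\<lambda>n. t^n / fact n * gpow S G n x y) sums
     (exp (-(s*t)) * (\<Sum>k. (s*t)^k / fact k * gpow S (\<lambda>z w. (if z = w then 1 else 0) + G z w / s) k x y))"
proof -
  define M where "M = (\<lambda>z w. (if z = w then 1 else 0) + G z w / s)"
  define a where "a k = (s*t)^k / fact k * gpow S M k x y" for k
  define b where "b k = (-(s*t))^k / fact k" for k
  have sa: "summable (\<lambda>k. norm (a k))" unfolding a_def
    by (rule exp_comp_summable[OF gpow_bound[OF fin y]])
  have sb: "summable (\<lambda>k. norm (b k))" unfolding b_def
    using exp_comp_summable[of "\<lambda>_. 1" 1 "-(s*t)"] by simp
  have bs: "b sums exp (-(s*t))" unfolding b_def using exp_converges[of "-(s*t)"]
    by (simp add: divide_inverse mult.commute)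
  have eq: "(\<Sum>i\<le>n. a i * b (n - i)) = t^n / fact n * gpow S G n x y" for n
  proof -
    have "t^n / fact n * gpow S G n x y = (\<Sum>k\<le>n. t^n / fact n * (real (n choose k) * (-s)^(n-k) * (s^k * gpow S M k x y)))"
      unfolding gpow_binom[OF fin y s, of G n x] M_def by (simp add: sum_distrib_left)
    also have "\<dots> = (\<Sum>i\<le>n. a i * b (n - i))"
    proof (rule sum.cong)
      fix k assume "k \<in> {..n}"
      then have kn: "k \<le> n" by simp
      have e: "(-(s*t))^(n-k) = (-s)^(n-k) * t^(n-k)"
        by (simp add: power_mult_distrib[symmetric])
      have tn: "t^n = t^k * t^(n-k)" using kn by (simp add: power_add[symmetric])
      show "t^n / fact n * (real (n choose k) * (-s)^(n-k) * (s^k * gpow S M k x y)) = a k * b (n - k)"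
        unfolding a_def b_def tn using kn e
        by (simp add: binomial_fact power_mult_distrib field_simps)
    qed simp
    finally show ?thesis by simp
  qed
  have "(\<lambda>n. \<Sum>i\<le>n. a i * b (n - i)) sums ((\<Sum>k. a k) * (\<Sum>k. b k))"
    by (rule Cauchy_product_sums[OF sa sb])
  then show ?thesis unfolding eq using sums_unique[OF bs] unfolding a_def M_def
    by (simp add: mult.commute)
qed




definition wb :: "real \<Rightarrow> nat \<Rightarrow> nat \<Rightarrow> real" where
  "wb c n d = real (n choose d) * c^d * (1-c)^(n-d)"

lemma wb_Suc_Suc: "wb c (Suc n) (Suc d) = (1-c) * wb c n (Suc d) + c * wb c n d"
proof -
  consider "d < n" | "d = n" | "n < d" by linarith
  then show ?thesis
  proof cases
    case 1
    then have e: "n - d = Suc (n - Suc d)" by simp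
    show ?thesis unfolding wb_def binomial_Suc_Suc of_nat_add e diff_Suc_Suc
      by (simp add: algebra_simps)
  next
    case 2 then show ?thesis unfolding wb_def by simp
  next
    case 3 then show ?thesis unfolding wb_def by (simp add: binomial_eq_0)
  qed
qed

lemma wb_Suc_0: "wb c (Suc n) 0 = (1-c) * wb c n 0"
  unfolding wb_def by simp

lemma wb_0_Suc: "wb c 0 (Suc d) = 0"
  unfolding wb_def by simp

definition hg :: "nat \<Rightarrow> real \<Rightarrow> real \<Rightarrow> nat \<Rightarrow> real" where
  "hg Q al be l = real ((l - 1) choose (Q - 1)) * be^Q * al^(l - Q)"

definition Tg :: "nat \<Rightarrow> real \<Rightarrow> real \<Rightarrow> real \<Rightarrow> nat \<Rightarrow> nat \<Rightarrow> nat \<Rightarrow> real" where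
  "Tg Q al be c k x l = (if l \<le> k then hg Q al be l * wb c (k - l) (x + Q - l) else 0)"

definition Bg :: "nat \<Rightarrow> real \<Rightarrow> real \<Rightarrow> real \<Rightarrow> nat \<Rightarrow> nat \<Rightarrow> real" where
  "Bg Q al be c k x = (\<Sum>l=Q..x+Q. Tg Q al be c k x l)"

lemma Bg_rec:
  "Bg Q al be c (Suc k) x = (1-c) * Bg Q al be c k x + (if 0 < x then c * Bg Q al be c k (x-1) else 0)
     + (if Suc k = x + Q then hg Q al be (x+Q) else 0)"
proof -
  let ?T = "Tg Q al be c"
  have iv: "{Q..x+Q} = insert (x+Q) {Q..<x+Q}" by auto
  have split: "Bg Q al be c k' x = (\<Sum>l\<in>{Q..<x+Q}. ?T k' x l) + ?T k' x (x+Q)" for k'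
    unfolding Bg_def iv by (simp add: add.commute)
  have s2: "(if 0 < x then c * Bg Q al be c k (x-1) else 0) = (\<Sum>l\<in>{Q..<x+Q}. c * ?T k (x-1) l)"
  proof (cases "x = 0")
    case True then show ?thesis by simp
  next
    case False
    then have "{Q..x-1+Q} = {Q..<x+Q}" by auto
    then show ?thesis using False unfolding Bg_def by (simp add: sum_distrib_left)
  qed
  have s3: "?T (Suc k) x l = (1-c) * ?T k x l + c * ?T k (x-1) l" if l: "l \<in> {Q..<x+Q}" for l
  proof -
    from l have e1: "x + Q - l = Suc (x - 1 + Q - l)" and e2: "x - 1 + Q - l = x - 1 + Q - l" by auto
    consider "l \<le> k" | "l = Suc k" | "Suc k < l" by linarith
    then show ?thesis
    proof cases
      case 1
      then have "Suc k - l = Suc (k - l)" by simp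
      then show ?thesis using 1 unfolding Tg_def e1 by (simp add: wb_Suc_Suc algebra_simps)
    next
      case 2 then show ?thesis unfolding Tg_def e1 by (simp add: wb_0_Suc)
    next
      case 3 then show ?thesis unfolding Tg_def by simp
    qed
  qed
  have s4: "?T (Suc k) x (x+Q) = (1-c) * ?T k x (x+Q) + (if Suc k = x + Q then hg Q al be (x+Q) else 0)"
  proof -
    consider "x + Q \<le> k" | "x + Q = Suc k" | "Suc k < x + Q" by linarith
    then show ?thesis
    proof cases
      case 1
      then have "Suc k - (x+Q) = Suc (k - (x+Q))" by simp
      then show ?thesis using 1 unfolding Tg_def by (simp add: wb_Suc_0)
    next
      case 2 then show ?thesis unfolding Tg_def by (simp add: wb_def)
    next
      case 3 then show ?thesis unfolding Tg_def by simp
    qed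
  qed
  have s5: "(\<Sum>l\<in>{Q..<x+Q}. ?T (Suc k) x l) = (1-c)*(\<Sum>l\<in>{Q..<x+Q}. ?T k x l) + (\<Sum>l\<in>{Q..<x+Q}. c * ?T k (x-1) l)"
    by (simp only: sum.cong[OF refl s3] sum.distrib sum_distrib_left)
  show ?thesis
    unfolding split s2 s4 s5 by (simp add: algebra_simps)
qed

definition Jg :: "real \<Rightarrow> real \<Rightarrow> nat \<Rightarrow> nat \<Rightarrow> nat \<Rightarrow> real" where
  "Jg a b k x y = (if k = x + y then real (k choose x) * a^x * b^y else 0)"

lemma Jg_rec:
  "Jg a b (Suc k) x y = (if 0 < x then a * Jg a b k (x-1) y else 0) + (if 0 < y then b * Jg a b k x (y-1) else 0)"
proof (cases x)
  case 0
  then show ?thesis by (cases y) (auto simp: Jg_def)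
next
  case (Suc x')
  then show ?thesis by (cases y) (auto simp: Jg_def algebra_simps)
qed




lemma mem_states[simp]: "(a, b) \<in> inv_states Q1 Q2 \<longleftrightarrow> a \<le> Q1 \<and> b \<le> Q2"
  by (simp add: inv_states_def)

lemma finite_states[simp]: "finite (inv_states Q1 Q2)"
  by (simp add: inv_states_def)

lemma rate_int: "1 \<le> j1 \<Longrightarrow> 1 \<le> j2 \<Longrightarrow> inv_rate l1 l2 p12 p21 z (j1, j2) =
   (if z = (Suc j1, j2) then l1 else if z = (j1, Suc j2) then l2 else 0)"
  by (cases z) (auto simp: inv_rate_def Let_def)

lemma rate_b1: "1 \<le> j1 \<Longrightarrow> inv_rate l1 l2 p12 p21 z (j1, 0) =
   (if z = (j1, 1) then l2 else if z = (Suc j1, 0) then l1 + l2 * p21 else 0)"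
  by (cases z) (auto simp: inv_rate_def Let_def)

lemma rate_b2: "1 \<le> j2 \<Longrightarrow> inv_rate l1 l2 p12 p21 z (0, j2) =
   (if z = (1, j2) then l1 else if z = (0, Suc j2) then l2 + l1 * p12 else 0)"
  by (cases z) (auto simp: inv_rate_def Let_def)

lemma rate_from_int: "1 \<le> i1 \<Longrightarrow> 1 \<le> i2 \<Longrightarrow> inv_rate l1 l2 p12 p21 (i1, i2) w =
   (if w = (i1 - 1, i2) then l1 else if w = (i1, i2 - 1) then l2 else 0)"
  by (auto simp: inv_rate_def Let_def)

lemma rate_from_b1: "1 \<le> i1 \<Longrightarrow> inv_rate l1 l2 p12 p21 (i1, 0) w =
   (if w = (i1 - 1, 0) then l1 + l2 * p21 else 0)"
  by (auto simp: inv_rate_def Let_def)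

lemma rate_from_b2: "1 \<le> i2 \<Longrightarrow> inv_rate l1 l2 p12 p21 (0, i2) w =
   (if w = (0, i2 - 1) then l2 + l1 * p12 else 0)"
  by (auto simp: inv_rate_def Let_def)

lemma sum_two:
  fixes f :: "'a \<Rightarrow> real"
  assumes "finite A" "p \<noteq> q"
  shows "(\<Sum>w\<in>A. f w * (if w = p then al else if w = q then be else 0)) =
     (if p \<in> A then f p * al else 0) + (if q \<in> A then f q * be else 0)"
proof -
  have "(\<Sum>w\<in>A. f w * (if w = p then al else if w = q then be else 0)) =
        (\<Sum>w\<in>A. (if w = p then f p * al else 0) + (if w = q then f q * be else 0))"
    using assms(2) by (intro sum.cong) auto
  also have "\<dots> = (if p \<in> A then f p * al else 0) + (if q \<in> A then f q * be else 0)"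
    using assms(1) by (simp add: sum.distrib)
  finally show ?thesis .
qed

lemma sum_three:
  fixes f :: "'a \<Rightarrow> real"
  assumes "finite A" "p \<noteq> q" "r \<noteq> p" "r \<noteq> q"
  shows "(\<Sum>w\<in>A. f w * (if w = r then ga else if w = p then al else if w = q then be else 0)) =
     (if r \<in> A then f r * ga else 0) + (if p \<in> A then f p * al else 0) + (if q \<in> A then f q * be else 0)"
proof -
  have "(\<Sum>w\<in>A. f w * (if w = r then ga else if w = p then al else if w = q then be else 0)) =
        (\<Sum>w\<in>A. (if w = r then f r * ga else 0) + (if w = p then f p * al else 0) + (if w = q then f q * be else 0))"
    using assms(2-4) by (intro sum.cong) auto
  also have "\<dots> = (if r \<in> A then f r * ga else 0) + (if p \<in> A then f p * al else 0) + (if q \<in> A then f q * be else 0)"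
    using assms(1) by (simp add: sum.distrib)
  finally show ?thesis .
qed

lemma gen_diag_int:
  assumes "1 \<le> j1" "j1 \<le> Q1" "1 \<le> j2" "j2 \<le> Q2"
  shows "inv_gen Q1 Q2 l1 l2 p12 p21 (j1, j2) (j1, j2) = - (l1 + l2)"
proof -
  have "(\<Sum>z\<in>inv_states Q1 Q2 - {(j1, j2)}. inv_rate l1 l2 p12 p21 (j1, j2) z)
      = (\<Sum>z\<in>inv_states Q1 Q2 - {(j1, j2)}. (\<lambda>_. 1) z * (if z = (j1 - 1, j2) then l1 else if z = (j1, j2 - 1) then l2 else 0))"
    using assms by (simp add: rate_from_int)
  also have "\<dots> = l1 + l2"
    using assms by (subst sum_two) auto
  finally show ?thesis by (simp add: inv_gen_def)
qed

lemma gen_diag_b1: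
  assumes "1 \<le> j1" "j1 \<le> Q1"
  shows "inv_gen Q1 Q2 l1 l2 p12 p21 (j1, 0) (j1, 0) = - (l1 + l2 * p21)"
  using assms by (auto simp: inv_gen_def rate_from_b1)

lemma gen_diag_b2:
  assumes "1 \<le> j2" "j2 \<le> Q2"
  shows "inv_gen Q1 Q2 l1 l2 p12 p21 (0, j2) (0, j2) = - (l2 + l1 * p12)"
  using assms by (auto simp: inv_gen_def rate_from_b2)




context
  fixes Q1 Q2 :: nat and l1 l2 p12 p21 :: real
  assumes Q1: "1 \<le> Q1" and Q2: "1 \<le> Q2" and l1: "0 < l1" and l2: "0 < l2"
begin

abbreviation "SS \<equiv> inv_states Q1 Q2"
abbreviation "GG \<equiv> inv_gen Q1 Q2 l1 l2 p12 p21"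
abbreviation "MM \<equiv> (\<lambda>z w. (if z = w then 1 else 0) + GG z w / (l1 + l2))"
abbreviation "uu k y \<equiv> gpow SS MM k (Q1, Q2) y"

lemma ss_pos: "(l1 + l2) > 0" using l1 l2 by simp

lemma M_int:
  assumes "1 \<le> j1" "j1 \<le> Q1" "1 \<le> j2" "j2 \<le> Q2"
  shows "MM z (j1, j2) = (if z = (Suc j1, j2) then l1 / (l1 + l2) else if z = (j1, Suc j2) then l2 / (l1 + l2) else 0)"
proof (cases "z = (j1, j2)")
  case True
  then show ?thesis using gen_diag_int[OF assms, of l1 l2 p12 p21] ss_pos by (simp add: field_simps)
next
  case False
  then show ?thesis using assms by (simp add: inv_gen_def rate_int)
qed

lemma M_b1:
  assumes "1 \<le> j1" "j1 \<le> Q1"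
  shows "MM z (j1, 0) = (if z = (j1, 0) then 1 - (l1 + l2 * p21) / (l1 + l2) else if z = (j1, 1) then l2 / (l1 + l2)
     else if z = (Suc j1, 0) then (l1 + l2 * p21) / (l1 + l2) else 0)"
proof (cases "z = (j1, 0)")
  case True
  then show ?thesis using gen_diag_b1[OF assms, of Q2 l1 l2 p12 p21] ss_pos by (simp add: field_simps)
next
  case False
  then show ?thesis using assms by (simp add: inv_gen_def rate_b1)
qed

lemma M_b2:
  assumes "1 \<le> j2" "j2 \<le> Q2"
  shows "MM z (0, j2) = (if z = (0, j2) then 1 - (l2 + l1 * p12) / (l1 + l2) else if z = (1, j2) then l1 / (l1 + l2)
     else if z = (0, Suc j2) then (l2 + l1 * p12) / (l1 + l2) else 0)"
proof (cases "z = (0, j2)")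
  case True
  then show ?thesis using gen_diag_b2[OF assms, of Q1 l1 l2 p12 p21] ss_pos by (simp add: field_simps)
next
  case False
  then show ?thesis using assms by (simp add: inv_gen_def rate_b2)
qed

lemma u_int:
  assumes "1 \<le> j1" "j1 \<le> Q1" "1 \<le> j2" "j2 \<le> Q2"
  shows "uu k (j1, j2) = Jg (l1/(l1 + l2)) (l2/(l1 + l2)) k (Q1 - j1) (Q2 - j2)"
  using assms
proof (induction k arbitrary: j1 j2)
  case 0
  then show ?case by (auto simp: Jg_def)
next
  case (Suc k)
  have "uu (Suc k) (j1, j2) = (\<Sum>z\<in>SS. uu k z * (if z = (Suc j1, j2) then l1 / (l1 + l2) else if z = (j1, Suc j2) then l2 / (l1 + l2) else 0))"
    using M_int[OF Suc.prems] by simp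
  also have "\<dots> = (if j1 < Q1 then uu k (Suc j1, j2) * (l1/(l1 + l2)) else 0) + (if j2 < Q2 then uu k (j1, Suc j2) * (l2/(l1 + l2)) else 0)"
    using Suc.prems by (subst sum_two) auto
  also have "\<dots> = (if 0 < Q1 - j1 then (l1/(l1 + l2)) * Jg (l1/(l1 + l2)) (l2/(l1 + l2)) k (Q1 - j1 - 1) (Q2 - j2) else 0)
      + (if 0 < Q2 - j2 then (l2/(l1 + l2)) * Jg (l1/(l1 + l2)) (l2/(l1 + l2)) k (Q1 - j1) (Q2 - j2 - 1) else 0)"
    using Suc.prems Suc.IH[of "Suc j1" j2] Suc.IH[of j1 "Suc j2"] by (auto simp: Suc_diff_Suc algebra_simps)
  also have "\<dots> = Jg (l1/(l1 + l2)) (l2/(l1 + l2)) (Suc k) (Q1 - j1) (Q2 - j2)"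
    by (rule Jg_rec[symmetric])
  finally show ?case .
qed

lemma u_b1:
  assumes "1 \<le> j1" "j1 \<le> Q1"
  shows "uu k (j1, 0) = Bg Q2 (l1/(l1 + l2)) (l2/(l1 + l2)) ((l1 + l2 * p21) / (l1 + l2)) k (Q1 - j1)"
  using assms
proof (induction k arbitrary: j1)
  case 0
  have "Tg Q2 (l1/(l1 + l2)) (l2/(l1 + l2)) ((l1 + l2 * p21) / (l1 + l2)) 0 (Q1 - j1) l = 0" if "l \<in> {Q2..Q1 - j1 + Q2}" for l
    using that Q2 by (auto simp: Tg_def)
  then show ?case using Q2 unfolding Bg_def by simp
next
  case (Suc k)
  let ?c = "(l1 + l2 * p21) / (l1 + l2)"
  let ?x = "Q1 - j1"
  have "uu (Suc k) (j1, 0) = (\<Sum>z\<in>SS. uu k z * (if z = (j1, 0) then 1 - ?c else if z = (j1, 1) then l2 / (l1 + l2)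
     else if z = (Suc j1, 0) then ?c else 0))"
    using M_b1[OF Suc.prems] by simp
  also have "\<dots> = uu k (j1, 0) * (1 - ?c) + uu k (j1, 1) * (l2/(l1 + l2)) + (if j1 < Q1 then uu k (Suc j1, 0) * ?c else 0)"
    using Suc.prems Q2 by (subst sum_three) auto
  also have "\<dots> = (1 - ?c) * Bg Q2 (l1/(l1 + l2)) (l2/(l1 + l2)) ?c k ?x + (if 0 < ?x then ?c * Bg Q2 (l1/(l1 + l2)) (l2/(l1 + l2)) ?c k (?x - 1) else 0)
      + (l2/(l1 + l2)) * Jg (l1/(l1 + l2)) (l2/(l1 + l2)) k ?x (Q2 - 1)"
    using Suc.prems Suc.IH[of "Suc j1"] Suc.IH[of j1] u_int[of j1 1 k] Q2 by (auto simp: Suc_diff_Suc algebra_simps)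
  also have "(l2/(l1 + l2)) * Jg (l1/(l1 + l2)) (l2/(l1 + l2)) k ?x (Q2 - 1) = (if Suc k = ?x + Q2 then hg Q2 (l1/(l1 + l2)) (l2/(l1 + l2)) (?x + Q2) else 0)"
  proof -
    obtain q where q: "Q2 = Suc q" using Q2 by (cases Q2) auto
    have ch: "(?x + q) choose ?x = (?x + q) choose q" using binomial_symmetric[of ?x "?x+q"] by simp
    show ?thesis unfolding Jg_def hg_def q using ch by (auto simp: algebra_simps)
  qed
  also have "(1 - ?c) * Bg Q2 (l1/(l1 + l2)) (l2/(l1 + l2)) ?c k ?x + (if 0 < ?x then ?c * Bg Q2 (l1/(l1 + l2)) (l2/(l1 + l2)) ?c k (?x - 1) else 0)
      + (if Suc k = ?x + Q2 then hg Q2 (l1/(l1 + l2)) (l2/(l1 + l2)) (?x + Q2) else 0) = Bg Q2 (l1/(l1 + l2)) (l2/(l1 + l2)) ?c (Suc k) ?x"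
    by (rule Bg_rec[symmetric])
  finally show ?case .
qed

lemma u_b2:
  assumes "1 \<le> j2" "j2 \<le> Q2"
  shows "uu k (0, j2) = Bg Q1 (l2/(l1 + l2)) (l1/(l1 + l2)) ((l2 + l1 * p12) / (l1 + l2)) k (Q2 - j2)"
  using assms
proof (induction k arbitrary: j2)
  case 0
  have "Tg Q1 (l2/(l1 + l2)) (l1/(l1 + l2)) ((l2 + l1 * p12) / (l1 + l2)) 0 (Q2 - j2) l = 0" if "l \<in> {Q1..Q2 - j2 + Q1}" for l
    using that Q1 by (auto simp: Tg_def)
  then show ?case using Q1 unfolding Bg_def by simp
next
  case (Suc k)
  let ?c = "(l2 + l1 * p12) / (l1 + l2)"
  let ?x = "Q2 - j2"
  have "uu (Suc k) (0, j2) = (\<Sum>z\<in>SS. uu k z * (if z = (0, j2) then 1 - ?c else if z = (1, j2) then l1 / (l1 + l2)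
     else if z = (0, Suc j2) then ?c else 0))"
    using M_b2[OF Suc.prems] by simp
  also have "\<dots> = uu k (0, j2) * (1 - ?c) + uu k (1, j2) * (l1/(l1 + l2)) + (if j2 < Q2 then uu k (0, Suc j2) * ?c else 0)"
    using Suc.prems Q1 by (subst sum_three) auto
  also have "\<dots> = (1 - ?c) * Bg Q1 (l2/(l1 + l2)) (l1/(l1 + l2)) ?c k ?x + (if 0 < ?x then ?c * Bg Q1 (l2/(l1 + l2)) (l1/(l1 + l2)) ?c k (?x - 1) else 0)
      + (l1/(l1 + l2)) * Jg (l1/(l1 + l2)) (l2/(l1 + l2)) k (Q1 - 1) ?x"
    using Suc.prems Suc.IH[of "Suc j2"] Suc.IH[of j2] u_int[of 1 j2 k] Q1 by (auto simp: Suc_diff_Suc algebra_simps)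
  also have "(l1/(l1 + l2)) * Jg (l1/(l1 + l2)) (l2/(l1 + l2)) k (Q1 - 1) ?x = (if Suc k = ?x + Q1 then hg Q1 (l2/(l1 + l2)) (l1/(l1 + l2)) (?x + Q1) else 0)"
  proof -
    obtain q where q: "Q1 = Suc q" using Q1 by (cases Q1) auto
    show ?thesis unfolding Jg_def hg_def q by (auto simp: algebra_simps)
  qed
  also have "(1 - ?c) * Bg Q1 (l2/(l1 + l2)) (l1/(l1 + l2)) ?c k ?x + (if 0 < ?x then ?c * Bg Q1 (l2/(l1 + l2)) (l1/(l1 + l2)) ?c k (?x - 1) else 0)
      + (if Suc k = ?x + Q1 then hg Q1 (l2/(l1 + l2)) (l1/(l1 + l2)) (?x + Q1) else 0) = Bg Q1 (l2/(l1 + l2)) (l1/(l1 + l2)) ?c (Suc k) ?x"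
    by (rule Bg_rec[symmetric])
  finally show ?case .
qed

end




lemma gpow_rowsum:
  assumes "finite S" "x \<in> S" "\<And>z. z \<in> S \<Longrightarrow> (\<Sum>y\<in>S. G z y) = 0"
  shows "(\<Sum>y\<in>S. gpow S G n x y) = (if n = 0 then 1 else 0)"
proof (cases n)
  case 0 then show ?thesis using assms by simp
next
  case (Suc m)
  have "(\<Sum>y\<in>S. gpow S G (Suc m) x y) = (\<Sum>y\<in>S. \<Sum>z\<in>S. gpow S G m x z * G z y)" by simp
  also have "\<dots> = (\<Sum>z\<in>S. \<Sum>y\<in>S. gpow S G m x z * G z y)" by (rule sum.swap)
  also have "\<dots> = (\<Sum>z\<in>S. gpow S G m x z * (\<Sum>y\<in>S. G z y))" by (simp add: sum_distrib_left)
  also have "\<dots> = 0" using assms(3) by simp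
  finally show ?thesis using Suc by simp
qed

lemma inv_gen_rowsum:
  assumes "z \<in> inv_states Q1 Q2"
  shows "(\<Sum>y\<in>inv_states Q1 Q2. inv_gen Q1 Q2 l1 l2 p12 p21 z y) = 0"
proof -
  have "(\<Sum>y\<in>inv_states Q1 Q2. inv_gen Q1 Q2 l1 l2 p12 p21 z y) =
     inv_gen Q1 Q2 l1 l2 p12 p21 z z + (\<Sum>y\<in>inv_states Q1 Q2 - {z}. inv_gen Q1 Q2 l1 l2 p12 p21 z y)"
    using assms by (simp add: sum.remove)
  also have "(\<Sum>y\<in>inv_states Q1 Q2 - {z}. inv_gen Q1 Q2 l1 l2 p12 p21 z y)
      = (\<Sum>y\<in>inv_states Q1 Q2 - {z}. inv_rate l1 l2 p12 p21 z y)"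
    by (rule sum.cong) (auto simp: inv_gen_def)
  finally show ?thesis by (simp add: inv_gen_def)
qed

lemma Bg_small:
  assumes "k < x + Q"
  shows "Bg Q al be c k x = 0"
  unfolding Bg_def
proof (rule sum.neutral, rule ballI)
  fix l assume "l \<in> {Q..x+Q}"
  then show "Tg Q al be c k x l = 0" using assms
    by (auto simp: Tg_def wb_def binomial_eq_0)
qed

lemma Bg_big:
  assumes "x + Q \<le> k"
  shows "Bg Q al be c k x = (\<Sum>l=Q..x+Q. real ((l - 1) choose (Q - 1)) * be^Q * al^(l - Q)
       * real ((k - l) choose (x + Q - l)) * c^(x + Q - l) * (1 - c)^(k - (x + Q)))"
  unfolding Bg_def
proof (rule sum.cong[OF refl])
  fix l assume l: "l \<in> {Q..x+Q}"
  then have e: "k - l - (x + Q - l) = k - (x + Q)" using assms by auto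
  show "Tg Q al be c k x l = real ((l - 1) choose (Q - 1)) * be^Q * al^(l - Q)
       * real ((k - l) choose (x + Q - l)) * c^(x + Q - l) * (1 - c)^(k - (x + Q))"
    using l assms unfolding Tg_def hg_def wb_def e by (simp add: algebra_simps)
qed

theorem theorem1:
  fixes Q1 Q2 :: nat and l1 l2 p12 p21 t :: real
  assumes "1 \<le> Q1" "1 \<le> Q2" "0 < l1" "0 < l2"
    and "0 \<le> p12" "p12 \<le> 1" "0 \<le> p21" "p21 \<le> 1" "0 \<le> t"
  defines "s \<equiv> l1 + l2" and "s1 \<equiv> l1 + l2 * p21" and "s2 \<equiv> l2 + l1 * p12"
    and "p \<equiv> (\<lambda>j. inv_trans Q1 Q2 l1 l2 p12 p21 t (Q1, Q2) j)"
  shows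
    "(\<forall>j1 j2. 1 \<le> j1 \<and> j1 \<le> Q1 \<and> 1 \<le> j2 \<and> j2 \<le> Q2 \<longrightarrow>
        p (j1, j2) =
          exp (- s * t) * (s * t) ^ (Q1 + Q2 - j1 - j2) / fact (Q1 + Q2 - j1 - j2)
          * real ((Q1 + Q2 - j1 - j2) choose (Q1 - j1))
          * (l1 / s) ^ (Q1 - j1) * (l2 / s) ^ (Q2 - j2))
   \<and> (\<forall>j1. 1 \<le> j1 \<and> j1 \<le> Q1 \<longrightarrow>
        (\<lambda>i. let k = i + (Q1 + Q2 - j1) in
           exp (- s * t) * (s * t) ^ k / fact k *
           (\<Sum>l = Q2..Q1 + Q2 - j1.
              real ((l - 1) choose (Q2 - 1)) * (l2 / s) ^ Q2 * (l1 / s) ^ (l - Q2)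
              * real ((k - l) choose (Q1 + Q2 - j1 - l))
              * (s1 / s) ^ (Q1 + Q2 - j1 - l) * ((s - s1) / s) ^ (k - (Q1 + Q2 - j1))))
        sums p (j1, 0))
   \<and> (\<forall>j2. 1 \<le> j2 \<and> j2 \<le> Q2 \<longrightarrow>
        (\<lambda>i. let k = i + (Q1 + Q2 - j2) in
           exp (- s * t) * (s * t) ^ k / fact k *
           (\<Sum>l = Q1..Q1 + Q2 - j2.
              real ((l - 1) choose (Q1 - 1)) * (l1 / s) ^ Q1 * (l2 / s) ^ (l - Q1)
              * real ((k - l) choose (Q1 + Q2 - j2 - l))
              * (s2 / s) ^ (Q1 + Q2 - j2 - l) * ((s - s2) / s) ^ (k - (Q1 + Q2 - j2))))
        sums p (0, j2))
   \<and> p (0, 0) = 1 - (\<Sum>j\<in>inv_states Q1 Q2 - {(0, 0)}. p j)"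
proof -
  let ?S = "inv_states Q1 Q2"
  let ?G = "inv_gen Q1 Q2 l1 l2 p12 p21"
  let ?M = "\<lambda>z w. (if z = w then 1 else 0) + ?G z w / (l1 + l2)"
  define u where "u k y = gpow ?S ?M k (Q1, Q2) y" for k y
  have sp: "l1 + l2 > 0" using assms by simp
  have s0: "l1 + l2 \<noteq> 0" using sp by simp
  have sdef: "s = l1 + l2" by (simp add: s_def)
  have F: "(\<lambda>k. exp (-(s*t)) * ((s*t)^k / fact k * u k y)) sums p y" if y: "y \<in> ?S" for y
  proof -
    have gs: "(\<lambda>n. t^n / fact n * inv_gen_pow Q1 Q2 l1 l2 p12 p21 n (Q1, Q2) y) sums
       (exp (-(s*t)) * (\<Sum>k. (s*t)^k / fact k * u k y))"
      unfolding inv_gen_pow_eq u_def sdef by (rule gpow_exp_sums[OF finite_states y s0])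
    have pu: "p y = exp (-(s*t)) * (\<Sum>k. (s*t)^k / fact k * u k y)"
      unfolding p_def inv_trans_def using sums_unique[OF gs] by simp
    have su: "summable (\<lambda>k. (s*t)^k / fact k * u k y)"
      unfolding u_def by (rule summable_norm_cancel[OF exp_comp_summable[OF gpow_bound[OF finite_states y]]])
    show ?thesis unfolding pu by (rule sums_mult[OF summable_sums[OF su]])
  qed
  have partA: "p (j1, j2) =
          exp (- s * t) * (s * t) ^ (Q1 + Q2 - j1 - j2) / fact (Q1 + Q2 - j1 - j2)
          * real ((Q1 + Q2 - j1 - j2) choose (Q1 - j1))
          * (l1 / s) ^ (Q1 - j1) * (l2 / s) ^ (Q2 - j2)"
    if j: "1 \<le> j1" "j1 \<le> Q1" "1 \<le> j2" "j2 \<le> Q2" for j1 j2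
  proof -
    let ?N = "Q1 + Q2 - j1 - j2"
    have N: "?N = (Q1 - j1) + (Q2 - j2)" using j by simp
    define g where "g k = exp (-(s*t)) * ((s*t)^k / fact k * (real (k choose (Q1 - j1)) * (l1/s)^(Q1 - j1) * (l2/s)^(Q2 - j2)))" for k
    have eq: "(\<lambda>k. exp (-(s*t)) * ((s*t)^k / fact k * u k (j1, j2))) = (\<lambda>k. if k = ?N then g k else 0)"
      unfolding u_def sdef g_def using u_int[OF assms(1-4) j] N by (auto simp: Jg_def)
    have "(\<lambda>k. exp (-(s*t)) * ((s*t)^k / fact k * u k (j1, j2))) sums g ?N"
      unfolding eq by (rule sums_single)
    then have "(\<lambda>k. exp (-(s*t)) * ((s*t)^k / fact k * u k (j1, j2))) sums
       (exp (-(s*t)) * ((s*t)^?N / fact ?N * (real (?N choose (Q1 - j1)) * (l1/s)^(Q1 - j1) * (l2/s)^(Q2 - j2))))"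
      unfolding g_def .
    from sums_unique2[OF F[of "(j1,j2)"] this] j show ?thesis by simp
  qed
  have partB: "(\<lambda>i. let k = i + (Q1 + Q2 - j1) in
           exp (- s * t) * (s * t) ^ k / fact k *
           (\<Sum>l = Q2..Q1 + Q2 - j1.
              real ((l - 1) choose (Q2 - 1)) * (l2 / s) ^ Q2 * (l1 / s) ^ (l - Q2)
              * real ((k - l) choose (Q1 + Q2 - j1 - l))
              * (s1 / s) ^ (Q1 + Q2 - j1 - l) * ((s - s1) / s) ^ (k - (Q1 + Q2 - j1))))
        sums p (j1, 0)" if j: "1 \<le> j1" "j1 \<le> Q1" for j1
  proof -
    let ?m = "Q1 + Q2 - j1"
    let ?c = "s1 / s"
    have m: "?m = (Q1 - j1) + Q2" using j by simp
    have c1: "(s - s1) / s = 1 - ?c" using s0 sdef by (simp add: field_simps)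
    have ub: "u k (j1, 0) = Bg Q2 (l1/s) (l2/s) ?c k (Q1 - j1)" for k
      unfolding u_def sdef s1_def using u_b1[OF assms(1-4) j] .
    define f where "f k = exp (-(s*t)) * ((s*t)^k / fact k * u k (j1, 0))" for k
    have z: "(\<Sum>i<?m. f i) = 0"
      by (rule sum.neutral) (auto simp: f_def ub m intro!: Bg_small)
    have "f sums (p (j1, 0) + (\<Sum>i<?m. f i))" using F[of "(j1, 0)"] j z unfolding f_def by simp
    then have sh: "(\<lambda>i. f (i + ?m)) sums p (j1, 0)" by (subst sums_iff_shift)
    have eqf: "f (i + ?m) = (let k = i + (Q1 + Q2 - j1) in
           exp (- s * t) * (s * t) ^ k / fact k *
           (\<Sum>l = Q2..Q1 + Q2 - j1.
              real ((l - 1) choose (Q2 - 1)) * (l2 / s) ^ Q2 * (l1 / s) ^ (l - Q2)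
              * real ((k - l) choose (Q1 + Q2 - j1 - l))
              * (s1 / s) ^ (Q1 + Q2 - j1 - l) * ((s - s1) / s) ^ (k - (Q1 + Q2 - j1))))" for i
      unfolding f_def ub Let_def c1 m by (subst Bg_big) auto
    show ?thesis using sh unfolding eqf .
  qed
  have partC: "(\<lambda>i. let k = i + (Q1 + Q2 - j2) in
           exp (- s * t) * (s * t) ^ k / fact k *
           (\<Sum>l = Q1..Q1 + Q2 - j2.
              real ((l - 1) choose (Q1 - 1)) * (l1 / s) ^ Q1 * (l2 / s) ^ (l - Q1)
              * real ((k - l) choose (Q1 + Q2 - j2 - l))
              * (s2 / s) ^ (Q1 + Q2 - j2 - l) * ((s - s2) / s) ^ (k - (Q1 + Q2 - j2))))
        sums p (0, j2)" if j: "1 \<le> j2" "j2 \<le> Q2" for j2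
  proof -
    let ?m = "Q1 + Q2 - j2"
    let ?c = "s2 / s"
    have m: "?m = (Q2 - j2) + Q1" using j by simp
    have c1: "(s - s2) / s = 1 - ?c" using s0 sdef by (simp add: field_simps)
    have ub: "u k (0, j2) = Bg Q1 (l2/s) (l1/s) ?c k (Q2 - j2)" for k
      unfolding u_def sdef s2_def using u_b2[OF assms(1-4) j] .
    define f where "f k = exp (-(s*t)) * ((s*t)^k / fact k * u k (0, j2))" for k
    have z: "(\<Sum>i<?m. f i) = 0"
      by (rule sum.neutral) (auto simp: f_def ub m intro!: Bg_small)
    have "f sums (p (0, j2) + (\<Sum>i<?m. f i))" using F[of "(0, j2)"] j z unfolding f_def by simp
    then have sh: "(\<lambda>i. f (i + ?m)) sums p (0, j2)" by (subst sums_iff_shift)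
    have eqf: "f (i + ?m) = (let k = i + (Q1 + Q2 - j2) in
           exp (- s * t) * (s * t) ^ k / fact k *
           (\<Sum>l = Q1..Q1 + Q2 - j2.
              real ((l - 1) choose (Q1 - 1)) * (l1 / s) ^ Q1 * (l2 / s) ^ (l - Q1)
              * real ((k - l) choose (Q1 + Q2 - j2 - l))
              * (s2 / s) ^ (Q1 + Q2 - j2 - l) * ((s - s2) / s) ^ (k - (Q1 + Q2 - j2))))" for i
      unfolding f_def ub Let_def c1 m by (subst Bg_big) auto
    show ?thesis using sh unfolding eqf .
  qed
  have partD: "p (0, 0) = 1 - (\<Sum>j\<in>inv_states Q1 Q2 - {(0, 0)}. p j)"
  proof -
    have Q: "(Q1, Q2) \<in> ?S" by simp
    have sm: "summable (\<lambda>n. t^n / fact n * inv_gen_pow Q1 Q2 l1 l2 p12 p21 n (Q1, Q2) y)" if "y \<in> ?S" for y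
      unfolding inv_gen_pow_eq by (rule sums_summable[OF gpow_exp_sums[OF finite_states that s0]])
    have "(\<Sum>y\<in>?S. p y) = (\<Sum>n. \<Sum>y\<in>?S. t^n / fact n * inv_gen_pow Q1 Q2 l1 l2 p12 p21 n (Q1, Q2) y)"
      unfolding p_def inv_trans_def by (rule suminf_sum[symmetric]) (rule sm)
    also have "\<dots> = (\<Sum>n. if n = 0 then 1 else 0)"
      unfolding inv_gen_pow_eq sum_distrib_left[symmetric]
      by (subst gpow_rowsum[OF finite_states Q inv_gen_rowsum]) (auto intro!: arg_cong[where f=suminf] ext)
    also have "\<dots> = 1" using sums_single[of 0 "\<lambda>_. 1::real"] sums_unique by fastforce
    finally have "(\<Sum>y\<in>?S. p y) = 1" .
    moreover have "(\<Sum>y\<in>?S. p y) = p (0,0) + (\<Sum>j\<in>?S - {(0, 0)}. p j)"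
      by (simp add: sum.remove)
    ultimately show ?thesis by simp
  qed
  show ?thesis using partA partB partC partD by blast
qed


end
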